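(* Let $p\ge 1$, let $n_1,\dots,n_p\ge1$ and $k_s\in[n_s]$ for each $s$. Suppose there is a maximum-size non-trivially intersecting family $\mathcal{F}\subseteq \prod_{s}\binom{[n_s]}{k_s}$ which is $Q$-shifted for some $Q\subsetneq [p]$ such that $k_t>1$ for some $t\notin Q$. Then there is a maximum-size non-trivially intersecting family $\mathcal{F}'\subseteq \prod_{s}\binom{[n_s]}{k_s}$ which is shifted.
   Context: Multi-part setting: the ground set is the disjoint union $\bigsqcup_{s=1}^p [n_s]$ of $p$ parts, $[n]=\{1,\dots,n\}$. For $F_s\subseteq[n_s]$, $\bigsqcup_s F_s$ denotes the subset having $F_s$ in part $s$; $\prod_{s}\binom{[n_s]}{k_s}$ is the collection of all $\bigsqcup_s F_s$ with $|F_s|=k_s$ for all $s$. A family is intersecting if any two of its sets intersect (in some part); trivially intersecting if some element (in some part) lies in all its sets; non-trivially intersecting if intersecting but not trivially intersecting. "Maximum-size" means of maximum size among all non-trivially intersecting subfamilies of $\prod_{s}\binom{[n_s]}{k_s}$. Shifting: for $t\in[p]$, $1\le i<j\le n_t$ and $F=\bigsqcup_s F_s$, $S_t^{i,j}(F)=F$ if $i\in F_t$ or $j\notin F_t$, and otherwise $S_t^{i,j}(F)$ replaces $F_t$ by $(F_t\setminus\{j\})\cup\{i\}$. For a family, $S_t^{i,j}(\mathcal F)=\{S_t^{i,j}(F):F\in\mathcal F\}\cup\{F: F\in\mathcal F,\ S_t^{i,j}(F)\in\mathcal F\}$. $\mathcal F$ is $t$-shifted if $S_t^{i,j}(\mathcal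 F)=\mathcal F$ for all $1\le i<j\le n_t$, and shifted if $t$-shifted for all $t\in[p]$. A non-trivially intersecting family $\mathcal F$ is $Q$-shifted (for $Q\subseteq[p]$) if it is $s$-shifted for each $s\in Q$, and for each $s\notin Q$ there are $1\le i_s<j_s\le n_s$ such that $S_s^{i_s,j_s}(\mathcal F)$ is trivially intersecting. *)

theory Defs
  imports Main
begin

text \<open>Elements of the ground set are pairs (s, x): element x of part s,
  with 1 <= s <= p and 1 <= x <= n s. A set F = disjoint union of F_s is a set of
  such pairs, with F_s = {x. (s,x) in F}.\<close>

definition ground :: "nat \<Rightarrow> (nat \<Rightarrow> nat) \<Rightarrow> (nat \<times> nat) set" where
  "ground p n = {(s, x). s \<in> {1..p} \<and> x \<in> {1..n s}}"

definition part :: "(nat \<times> nat) set \<Rightarrow> nat \<Rightarrow> nat set" where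
  "part F s = {x. (s, x) \<in> F}"

definition prod_binom :: "nat \<Rightarrow> (nat \<Rightarrow> nat) \<Rightarrow> (nat \<Rightarrow> nat) \<Rightarrow> (nat \<times> nat) set set" where
  "prod_binom p n k = {F. F \<subseteq> ground p n \<and> (\<forall>s\<in>{1..p}. card (part F s) = k s)}"

definition intersecting :: "(nat \<times> nat) set set \<Rightarrow> bool" where
  "intersecting \<F> \<longleftrightarrow> (\<forall>A\<in>\<F>. \<forall>B\<in>\<F>. A \<inter> B \<noteq> {})"

definition trivially_intersecting :: "(nat \<times> nat) set set \<Rightarrow> bool" where
  "trivially_intersecting \<F> \<longleftrightarrow> (\<exists>e. \<forall>A\<in>\<F>. e \<in> A)"

definition nontrivially_intersecting :: "(nat \<times> nat) set set \<Rightarrow> bool" where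
  "nontrivially_intersecting \<F> \<longleftrightarrow> intersecting \<F> \<and> \<not> trivially_intersecting \<F>"

definition max_nontriv :: "nat \<Rightarrow> (nat \<Rightarrow> nat) \<Rightarrow> (nat \<Rightarrow> nat) \<Rightarrow> (nat \<times> nat) set set \<Rightarrow> bool" where
  "max_nontriv p n k \<F> \<longleftrightarrow> \<F> \<subseteq> prod_binom p n k \<and> nontrivially_intersecting \<F> \<and>
     (\<forall>\<G>. \<G> \<subseteq> prod_binom p n k \<and> nontrivially_intersecting \<G> \<longrightarrow> card \<G> \<le> card \<F>)"

definition shift_set :: "nat \<Rightarrow> nat \<Rightarrow> nat \<Rightarrow> (nat \<times> nat) set \<Rightarrow> (nat \<times> nat) set" where
  "shift_set t i j F = (if (t, i) \<in> F \<or> (t, j) \<notin> F then F else (F - {(t, j)}) \<union> {(t, i)})"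

definition shift_fam :: "nat \<Rightarrow> nat \<Rightarrow> nat \<Rightarrow> (nat \<times> nat) set set \<Rightarrow> (nat \<times> nat) set set" where
  "shift_fam t i j \<F> = shift_set t i j ` \<F> \<union> {F \<in> \<F>. shift_set t i j F \<in> \<F>}"

definition part_shifted :: "(nat \<Rightarrow> nat) \<Rightarrow> nat \<Rightarrow> (nat \<times> nat) set set \<Rightarrow> bool" where
  "part_shifted n t \<F> \<longleftrightarrow> (\<forall>i j. 1 \<le> i \<and> i < j \<and> j \<le> n t \<longrightarrow> shift_fam t i j \<F> = \<F>)"

definition shifted :: "nat \<Rightarrow> (nat \<Rightarrow> nat) \<Rightarrow> (nat \<times> nat) set set \<Rightarrow> bool" where
  "shifted p n \<F> \<longleftrightarrow> (\<forall>t\<in>{1..p}. part_shifted n t \<F>)"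

definition Q_shifted :: "nat \<Rightarrow> (nat \<Rightarrow> nat) \<Rightarrow> nat set \<Rightarrow> (nat \<times> nat) set set \<Rightarrow> bool" where
  "Q_shifted p n Q \<F> \<longleftrightarrow> nontrivially_intersecting \<F> \<and>
     (\<forall>s\<in>Q. part_shifted n s \<F>) \<and>
     (\<forall>s\<in>{1..p} - Q. \<exists>i j. 1 \<le> i \<and> i < j \<and> j \<le> n s \<and>
         trivially_intersecting (shift_fam s i j \<F>))"

end

theory Submission
  imports Defs "HOL-Combinatorics.Transposition"
begin


lemma sh_changed:
  "(s,a) \<notin> G \<Longrightarrow> (s,b) \<in> G \<Longrightarrow> shift_set s a b G = insert (s,a) (G - {(s,b)})"
  by (auto simp: shift_set_def)

lemma sh_unchanged:
  "(s,a) \<in> G \<or> (s,b) \<notin> G \<Longrightarrow> shift_set s a b G = G"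
  by (auto simp: shift_set_def)

lemma sh_sub: "shift_set s a b G \<subseteq> insert (s,a) G"
  by (auto simp: shift_set_def)

lemma sh_mem: "e \<in> G \<Longrightarrow> e \<noteq> (s,b) \<Longrightarrow> e \<in> shift_set s a b G"
  by (auto simp: shift_set_def)

lemma sh_idem: "a \<noteq> b \<Longrightarrow> shift_set s a b (shift_set s a b G) = shift_set s a b G"
  by (auto simp: shift_set_def)

lemma sh_inj:
  assumes "a \<noteq> b" "shift_set s a b G \<noteq> G" "shift_set s a b H \<noteq> H"
    "shift_set s a b G = shift_set s a b H"
  shows "G = H"
proof -
  have g: "(s,a) \<notin> G" "(s,b) \<in> G" and h: "(s,a) \<notin> H" "(s,b) \<in> H"
    using assms(2,3) by (auto simp: shift_set_def split: if_splits)
  have "G = insert (s,b) (shift_set s a b G - {(s,a)})"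
    using g assms(1) by (auto simp: shift_set_def)
  moreover have "H = insert (s,b) (shift_set s a b H - {(s,a)})"
    using h assms(1) by (auto simp: shift_set_def)
  ultimately show ?thesis using assms(4) by simp
qed

lemma shift_fam_eq:
  assumes "a \<noteq> b"
  shows "shift_fam s a b F = {G\<in>F. shift_set s a b G \<in> F} \<union> shift_set s a b ` {G\<in>F. shift_set s a b G \<notin> F}"
proof -
  have "shift_set s a b ` {G\<in>F. shift_set s a b G \<in> F} \<subseteq> {G\<in>F. shift_set s a b G \<in> F}"
    using sh_idem[OF assms] by auto
  then show ?thesis unfolding shift_fam_def by blast
qed

lemma shift_fam_card:
  assumes "a \<noteq> b" "finite F"
  shows "card (shift_fam s a b F) = card F"
proof -
  let ?K = "{G\<in>F. shift_set s a b G \<in> F}" and ?D = "{G\<in>F. shift_set s a b G \<notin> F}"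
  have inj: "inj_on (shift_set s a b) ?D"
  proof (rule inj_onI)
    fix G H assume G: "G \<in> ?D" and H: "H \<in> ?D" and e: "shift_set s a b G = shift_set s a b H"
    have "shift_set s a b G \<noteq> G" "shift_set s a b H \<noteq> H" using G H by auto
    then show "G = H" using sh_inj[OF assms(1) _ _ e] by blast
  qed
  have "card (shift_fam s a b F) = card ?K + card (shift_set s a b ` ?D)"
    unfolding shift_fam_eq[OF assms(1)]
    by (rule card_Un_disjoint) (use assms(2) in simp_all, blast)
  also have "\<dots> = card ?K + card ?D" using card_image[OF inj] by simp
  also have "\<dots> = card (?K \<union> ?D)"
    by (rule card_Un_disjoint[symmetric]) (use assms(2) in auto)
  also have "?K \<union> ?D = F" by blast
  finally show ?thesis .
qed

lemma shift_fam_intersecting: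
  assumes "a \<noteq> b" "intersecting F"
  shows "intersecting (shift_fam s a b F)"
  unfolding intersecting_def
proof (intro ballI)
  let ?S = "shift_set s a b"
  fix X Y assume X: "X \<in> shift_fam s a b F" and Y: "Y \<in> shift_fam s a b F"
  have key: "X \<inter> ?S H \<noteq> {}" if XK: "X \<in> F" "?S X \<in> F" and H: "H \<in> F" for X H
  proof
    assume e: "X \<inter> ?S H = {}"
    have XH: "X \<inter> H \<noteq> {}" using assms(2) XK H unfolding intersecting_def by blast
    show False
    proof (cases "?S H = H")
      case True then show False using e XH by simp
    next
      case False
      have h1: "(s,a) \<notin> H" "(s,b) \<in> H" using False sh_unchanged by blast+
      obtain z where z: "z \<in> X" "z \<in> H" using XH by blast
      have "z = (s,b)" using sh_mem[OF z(2), of s b a] e z(1) by blast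
      then have xb: "(s,b) \<in> X" using z by simp
      have aSH: "(s,a) \<in> ?S H" using sh_changed[OF h1] by simp
      then have xa: "(s,a) \<notin> X" using e by blast
      have sx: "?S X = insert (s,a) (X - {(s,b)})" using sh_changed[OF xa xb] .
      have "?S X \<inter> H = {}"
      proof (rule ccontr)
        assume "?S X \<inter> H \<noteq> {}"
        then obtain w where w: "w \<in> ?S X" "w \<in> H" by blast
        have "w \<noteq> (s,a)" using w(2) h1 by blast
        then have "w \<in> X" "w \<noteq> (s,b)" using w(1) sx by auto
        then show False using sh_mem[OF w(2), of s b a] e by blast
      qed
      then show False using assms(2) XK H unfolding intersecting_def by blast
    qed
  qed
  have cases: "(Z \<in> F \<and> ?S Z \<in> F) \<or> (\<exists>H. H \<in> F \<and> Z = ?S H \<and> ?S H \<noteq> H)" if "Z \<in> shift_fam s a b F" for Z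
  proof -
    have "Z \<in> {G\<in>F. ?S G \<in> F} \<or> Z \<in> ?S ` {G\<in>F. ?S G \<notin> F}"
      using that unfolding shift_fam_eq[OF assms(1)] by blast
    then show ?thesis
    proof
      assume "Z \<in> ?S ` {G\<in>F. ?S G \<notin> F}"
      then obtain H where "H \<in> F" "?S H \<notin> F" "Z = ?S H" by blast
      then show ?thesis by metis
    qed simp
  qed
  have inS: "(s,a) \<in> ?S H" if "?S H \<noteq> H" for H
    using that by (auto simp: shift_set_def split: if_splits)
  show "X \<inter> Y \<noteq> {}"
  proof (cases "X \<in> F \<and> ?S X \<in> F")
    case x: True
    show ?thesis
    proof (cases "Y \<in> F \<and> ?S Y \<in> F")
      case True then show ?thesis using x assms(2) unfolding intersecting_def by blast
    next
      case False
      then obtain H where "H \<in> F" "Y = ?S H" using cases[OF Y] by blast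
      then show ?thesis using key[of X H] x by blast
    qed
  next
    case x: False
    then obtain G where G: "G \<in> F" "X = ?S G" "?S G \<noteq> G" using cases[OF X] by blast
    show ?thesis
    proof (cases "Y \<in> F \<and> ?S Y \<in> F")
      case True then show ?thesis using key[of Y G] G by blast
    next
      case False
      then obtain H where "H \<in> F" "Y = ?S H" "?S H \<noteq> H" using cases[OF Y] by blast
      then show ?thesis using G inS by blast
    qed
  qed
qed




definition wt :: "(nat \<times> nat) set \<Rightarrow> nat" where "wt G = sum snd G"
definition W :: "(nat \<times> nat) set set \<Rightarrow> nat" where "W F = sum wt F"

lemma sh_wt:
  assumes "finite G" "(s,a) \<notin> G" "(s,b) \<in> G"
  shows "wt (shift_set s a b G) + b = wt G + a"
proof -
  have "wt (shift_set s a b G) = a + wt (G - {(s,b)})"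
    unfolding sh_changed[OF assms(2,3)] wt_def using assms by (subst sum.insert) auto
  moreover have "wt G = b + wt (G - {(s,b)})"
    unfolding wt_def using assms by (subst sum.remove[of _ "(s,b)"]) auto
  ultimately show ?thesis by simp
qed

lemma W_less:
  assumes "finite F" "\<forall>G\<in>F. finite G" "a < b" "shift_fam s a b F \<noteq> F"
  shows "W (shift_fam s a b F) < W F"
proof -
  let ?S = "shift_set s a b"
  let ?K = "{G\<in>F. ?S G \<in> F}" and ?D = "{G\<in>F. ?S G \<notin> F}"
  have ab: "a \<noteq> b" using assms(3) by simp
  have Dne: "?D \<noteq> {}"
  proof
    assume "?D = {}"
    then have "?K = F" by blast
    then show False using assms(4) \<open>?D = {}\<close> unfolding shift_fam_eq[OF ab] by simp
  qed
  have inj: "inj_on ?S ?D"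
  proof (rule inj_onI)
    fix G H assume G: "G \<in> ?D" and H: "H \<in> ?D" and e: "?S G = ?S H"
    have "?S G \<noteq> G" "?S H \<noteq> H" using G H by auto
    then show "G = H" using sh_inj[OF ab _ _ e] by blast
  qed
  have lt: "wt (?S G) < wt G" if "G \<in> ?D" for G
  proof -
    have "?S G \<noteq> G" using that by auto
    then have "(s,a) \<notin> G" "(s,b) \<in> G" using sh_unchanged by blast+
    then show ?thesis using sh_wt[of G s a b] assms(2,3) that by auto
  qed
  have "W (shift_fam s a b F) = W ?K + W (?S ` ?D)"
    unfolding shift_fam_eq[OF ab] W_def
    by (rule sum.union_disjoint) (use assms(1) in simp_all, blast)
  also have "W (?S ` ?D) = (\<Sum>G\<in>?D. wt (?S G))"
    unfolding W_def by (rule sum.reindex[OF inj, unfolded comp_def])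
  also have "(\<Sum>G\<in>?D. wt (?S G)) < (\<Sum>G\<in>?D. wt G)"
    by (rule sum_strict_mono) (use assms(1) Dne lt in auto)
  also have "W ?K + (\<Sum>G\<in>?D. wt G) = W (?K \<union> ?D)"
    unfolding W_def by (rule sum.union_disjoint[symmetric]) (use assms(1) in auto)
  also have "?K \<union> ?D = F" by blast
  finally show ?thesis by simp
qed


lemma ground_eq: "ground p n = Sigma {1..p} (\<lambda>s. {1..n s})"
  unfolding ground_def by auto

lemma finite_ground: "finite (ground p n)"
  unfolding ground_eq by auto

lemma finite_P: "finite (prod_binom p n k)"
proof -
  have "prod_binom p n k \<subseteq> Pow (ground p n)" unfolding prod_binom_def by auto
  then show ?thesis using finite_ground finite_subset by blast
qed

lemma P_finite_mem: "G \<in> prod_binom p n k \<Longrightarrow> finite G"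
  unfolding prod_binom_def using finite_ground finite_subset by blast

lemma part_sh:
  "(s,a) \<notin> G \<Longrightarrow> (s,b) \<in> G \<Longrightarrow> part (shift_set s a b G) s' = (if s' = s then insert a (part G s - {b}) else part G s')"
  unfolding sh_changed part_def by auto

lemma sh_P:
  assumes "G \<in> prod_binom p n k" "s \<in> {1..p}" "1 \<le> a" "a < b" "b \<le> n s"
  shows "shift_set s a b G \<in> prod_binom p n k"
proof (cases "(s,a) \<in> G \<or> (s,b) \<notin> G")
  case True then show ?thesis using assms(1) sh_unchanged[OF True] by simp
next
  case False
  then have h: "(s,a) \<notin> G" "(s,b) \<in> G" by auto
  have Gg: "G \<subseteq> ground p n" using assms(1) unfolding prod_binom_def by blast
  have sag: "(s,a) \<in> ground p n" using assms(2-5) unfolding ground_def by auto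
  have sub: "shift_set s a b G \<subseteq> ground p n"
    unfolding sh_changed[OF h] using Gg sag by blast
  have fin: "finite (part G s)"
  proof -
    have "part G s \<subseteq> snd ` G" unfolding part_def by force
    then show ?thesis using P_finite_mem[OF assms(1)] finite_subset by blast
  qed
  have "card (part (shift_set s a b G) s') = k s'" if "s' \<in> {1..p}" for s'
  proof -
    have cG: "card (part G s') = k s'" using assms(1) that unfolding prod_binom_def by blast
    show ?thesis
    proof (cases "s' = s")
      case True
      have ab: "a \<notin> part G s" "b \<in> part G s" using h unfolding part_def by auto
      then have "card (part G s) > 0" using fin card_gt_0_iff by blast
      then have "card (insert a (part G s - {b})) = card (part G s)"
        using fin ab by (simp add: card_insert_disjoint card_Diff_singleton)
      then show ?thesis using True part_sh[OF h, of s'] cG by simp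
    next
      case False
      then show ?thesis using part_sh[OF h, of s'] cG by simp
    qed
  qed
  then show ?thesis using sub unfolding prod_binom_def by blast
qed

lemma sh_triv:
  assumes "\<forall>X\<in>shift_fam s a b F. e \<in> X" "e \<noteq> (s,a)"
  shows "\<forall>G\<in>F. e \<in> G"
proof
  fix G assume "G \<in> F"
  then have "shift_set s a b G \<in> shift_fam s a b F" unfolding shift_fam_def by blast
  then have "e \<in> shift_set s a b G" using assms(1) by blast
  then show "e \<in> G" using sh_sub[of s a b G] assms(2) by blast
qed

lemma mem_shift_fam: "G \<in> F \<Longrightarrow> shift_set s a b G \<in> F \<Longrightarrow> G \<in> shift_fam s a b F"
  unfolding shift_fam_def by blast

lemma fixed_closed: "shift_fam s a b F = F \<Longrightarrow> G \<in> F \<Longrightarrow> shift_set s a b G \<in> F"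
  unfolding shift_fam_def by blast




definition mk :: "nat \<Rightarrow> (nat \<Rightarrow> nat set) \<Rightarrow> (nat \<times> nat) set" where
  "mk p R = {(s,c). s \<in> {1..p} \<and> c \<in> R s}"

lemma part_mk: "s \<in> {1..p} \<Longrightarrow> part (mk p R) s = R s"
  unfolding mk_def part_def by auto

lemma mk_P:
  assumes "\<forall>s\<in>{1..p}. R s \<subseteq> {1..n s} \<and> card (R s) = k s"
  shows "mk p R \<in> prod_binom p n k"
proof -
  have "mk p R \<subseteq> ground p n"
  proof
    fix x assume "x \<in> mk p R"
    then obtain s c where x: "x = (s,c)" "s \<in> {1..p}" "c \<in> R s" unfolding mk_def by blast
    then have "c \<in> {1..n s}" using assms by blast
    then show "x \<in> ground p n" using x unfolding ground_def by blast
  qed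
  moreover have "\<forall>s\<in>{1..p}. card (part (mk p R) s) = k s" using assms part_mk by simp
  ultimately show ?thesis unfolding prod_binom_def by blast
qed

lemma choose_set:
  assumes "A \<subseteq> {1..N}" "A \<inter> B = {}" "finite B" "card A \<le> r" "r + card B \<le> N"
  shows "\<exists>R. A \<subseteq> R \<and> R \<subseteq> {1..N} \<and> R \<inter> B = {} \<and> card R = r"
proof -
  define C where "C = {1..N} - B - A"
  have fA: "finite A" using assms(1) finite_subset by blast
  have fC: "finite C" unfolding C_def by simp
  have cov: "{1..N} \<subseteq> C \<union> (B \<union> A)" unfolding C_def by blast
  have "card {1..N} \<le> card (C \<union> (B \<union> A))"
    by (rule card_mono) (use fC fA assms(3) cov in simp_all)
  moreover have "card (C \<union> (B \<union> A)) \<le> card C + card (B \<union> A)" by (rule card_Un_le)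
  moreover have "card (B \<union> A) \<le> card B + card A" by (rule card_Un_le)
  moreover have "card {1..N} = N" by simp
  ultimately have "r - card A \<le> card C" using assms(5) by linarith
  then obtain T where T: "T \<subseteq> C" "card T = r - card A" "finite T" by (rule obtain_subset_with_card_n)
  have fT: "finite T" using T(1) fC finite_subset by blast
  have "A \<inter> T = {}" using T(1) unfolding C_def by blast
  then have "card (A \<union> T) = card A + card T" using fT fA by (simp add: card_Un_disjoint)
  then have c: "card (A \<union> T) = r" using T(2) assms(4) by simp
  have "A \<union> T \<subseteq> {1..N}" using T(1) assms(1) unfolding C_def by blast
  moreover have "(A \<union> T) \<inter> B = {}" using T(1) assms(2) unfolding C_def by blast
  ultimately show ?thesis using c by blast
qed

lemma interval_lemma:
  assumes "finite X" "\<forall>c\<in>X. m \<le> c" "card X = r" "\<forall>c\<in>X. \<forall>d. m \<le> d \<longrightarrow> d < c \<longrightarrow> d \<in> X"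
  shows "X = {m..<m+r}"
proof -
  have sub: "X \<subseteq> {m..<m+r}"
  proof
    fix c assume c: "c \<in> X"
    show "c \<in> {m..<m+r}"
    proof (rule ccontr)
      assume "c \<notin> {m..<m+r}"
      then have cr: "m + r \<le> c" using assms(2) c by auto
      have "{m..c} \<subseteq> X"
      proof
        fix d assume "d \<in> {m..c}"
        then have "m \<le> d" "d < c \<or> d = c" by auto
        then show "d \<in> X" using assms(4) c by blast
      qed
      then have "card {m..c} \<le> r" using card_mono[OF assms(1)] assms(3) by blast
      then show False using cr by simp
    qed
  qed
  show ?thesis using card_subset_eq[OF _ sub] assms(3) by simp
qed

lemma P_ground: "G \<in> prod_binom p n k \<Longrightarrow> G \<subseteq> ground p n"
  unfolding prod_binom_def by blast

lemma P_part_sub: "G \<in> prod_binom p n k \<Longrightarrow> part G s \<subseteq> {1..n s}"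
  unfolding prod_binom_def part_def ground_def by auto

lemma P_part_card: "G \<in> prod_binom p n k \<Longrightarrow> s \<in> {1..p} \<Longrightarrow> card (part G s) = k s"
  unfolding prod_binom_def by blast

lemma P_eq_mk:
  assumes "G \<in> prod_binom p n k" "\<forall>s\<in>{1..p}. part G s = R s"
  shows "G = mk p R"
proof
  show "G \<subseteq> mk p R"
  proof
    fix x assume x: "x \<in> G"
    obtain s c where sc: "x = (s,c)" by force
    have "s \<in> {1..p}" using P_ground[OF assms(1)] x sc unfolding ground_def by auto
    moreover have "c \<in> part G s" using x sc unfolding part_def by auto
    ultimately show "x \<in> mk p R" using assms(2) sc unfolding mk_def by auto
  qed
  show "mk p R \<subseteq> G" using assms(2) unfolding mk_def part_def by auto
qed




locale sett =
  fixes p :: nat and n k :: "nat \<Rightarrow> nat" and t :: nat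
  assumes t: "t \<in> {1..p}" and kt: "2 \<le> k t" and kn: "\<forall>s\<in>{1..p}. 1 \<le> k s \<and> k s < n s"
begin

definition M where
  "M = {F. max_nontriv p n k F \<and> (\<forall>G\<in>F. (t,1) \<in> G \<or> (t,2) \<in> G)}"

lemma M_D:
  assumes "F \<in> M"
  shows "F \<subseteq> prod_binom p n k" "intersecting F" "\<not> trivially_intersecting F"
    "\<And>G. G \<subseteq> prod_binom p n k \<Longrightarrow> nontrivially_intersecting G \<Longrightarrow> card G \<le> card F"
    "\<And>G. G \<in> F \<Longrightarrow> (t,1) \<in> G \<or> (t,2) \<in> G" "finite F"
proof -
  show 1: "F \<subseteq> prod_binom p n k" using assms unfolding M_def max_nontriv_def by blast
  show "intersecting F" "\<not> trivially_intersecting F"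
    using assms unfolding M_def max_nontriv_def nontrivially_intersecting_def by blast+
  show "\<And>G. G \<subseteq> prod_binom p n k \<Longrightarrow> nontrivially_intersecting G \<Longrightarrow> card G \<le> card F"
    using assms unfolding M_def max_nontriv_def by blast
  show "\<And>G. G \<in> F \<Longrightarrow> (t,1) \<in> G \<or> (t,2) \<in> G" using assms unfolding M_def by blast
  show "finite F" using finite_subset[OF 1 finite_P] .
qed

lemma exH:
  assumes "s0 \<in> {1..p}" "(s0,c) \<noteq> (t,1)" "(s0,c) \<noteq> (t,2)"
  shows "\<exists>H\<in>prod_binom p n k. (t,1) \<in> H \<and> (t,2) \<in> H \<and> (s0,c) \<notin> H"
proof -
  have nt: "k t < n t" "2 \<le> k t" using kn t kt by auto
  obtain Rt where Rt: "{1,2} \<subseteq> Rt" "Rt \<subseteq> {1..n t}" "Rt \<inter> (if s0 = t then {c} else {}) = {}" "card Rt = k t"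
  proof -
    have "\<exists>R. {1,2} \<subseteq> R \<and> R \<subseteq> {1..n t} \<and> R \<inter> (if s0 = t then {c} else {}) = {} \<and> card R = k t"
      by (rule choose_set) (use nt assms in auto)
    then show ?thesis using that by blast
  qed
  obtain Rs where Rs: "Rs \<subseteq> {1..n s0}" "Rs \<inter> {c} = {}" "card Rs = k s0"
  proof -
    have "k s0 < n s0" using kn assms(1) by auto
    then have "\<exists>R. {} \<subseteq> R \<and> R \<subseteq> {1..n s0} \<and> R \<inter> {c} = {} \<and> card R = k s0"
      by (intro choose_set) auto
    then show ?thesis using that by blast
  qed
  define R where "R s = (if s = t then Rt else if s = s0 then Rs else {1..k s})" for s
  have "\<forall>s\<in>{1..p}. R s \<subseteq> {1..n s} \<and> card (R s) = k s"
    using Rt Rs kn unfolding R_def by auto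
  then have HP: "mk p R \<in> prod_binom p n k" by (rule mk_P)
  have "(t,1) \<in> mk p R" "(t,2) \<in> mk p R" using Rt t unfolding mk_def R_def by auto
  moreover have "(s0,c) \<notin> mk p R" using Rt(3) Rs(2) unfolding mk_def R_def by (auto split: if_splits)
  ultimately show ?thesis using HP by blast
qed

lemma A_full:
  assumes "F \<in> M" "H \<in> prod_binom p n k" "(t,1) \<in> H" "(t,2) \<in> H"
  shows "H \<in> F"
proof (rule ccontr)
  assume nH: "H \<notin> F"
  let ?G = "insert H F"
  have "?G \<subseteq> prod_binom p n k" using M_D(1)[OF assms(1)] assms(2) by blast
  moreover have "intersecting ?G"
    unfolding intersecting_def
  proof (intro ballI)
    fix A B assume A: "A \<in> ?G" and B: "B \<in> ?G"
    show "A \<inter> B \<noteq> {}"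
    proof (cases "A = H")
      case True
      show ?thesis
      proof (cases "B = H")
        case True then show ?thesis using \<open>A = H\<close> assms(3) by blast
      next
        case False then have "B \<in> F" using B by blast
        then show ?thesis using M_D(5)[OF assms(1)] \<open>A = H\<close> assms(3,4) by blast
      qed
    next
      case False then have AF: "A \<in> F" using A by blast
      show ?thesis
      proof (cases "B = H")
        case True then show ?thesis using M_D(5)[OF assms(1) AF] assms(3,4) by blast
      next
        case False then have "B \<in> F" using B by blast
        then show ?thesis using M_D(2)[OF assms(1)] AF unfolding intersecting_def by blast
      qed
    qed
  qed
  moreover have "\<not> trivially_intersecting ?G"
    using M_D(3)[OF assms(1)] unfolding trivially_intersecting_def by blast
  ultimately have "card ?G \<le> card F"
    using M_D(4)[OF assms(1)] unfolding nontrivially_intersecting_def by blast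
  then show False using nH M_D(6)[OF assms(1)] by simp
qed

lemma shift_fam_elems:
  assumes "X \<in> shift_fam s a b F"
  shows "X \<in> F \<or> (\<exists>G\<in>F. X = shift_set s a b G)"
  using assms unfolding shift_fam_def by blast

lemma in_M:
  assumes "F \<in> M" "s \<in> {1..p}" "1 \<le> a" "a < b" "b \<le> n s"
    and nt: "\<not> trivially_intersecting (shift_fam s a b F)"
  shows "shift_fam s a b F \<in> M"
proof -
  let ?S = "shift_fam s a b F"
  have ab: "a \<noteq> b" using assms by simp
  have sub: "?S \<subseteq> prod_binom p n k"
  proof
    fix X assume "X \<in> ?S"
    then have "X \<in> F \<or> (\<exists>G\<in>F. X = shift_set s a b G)" by (rule shift_fam_elems)
    then show "X \<in> prod_binom p n k"
    proof
      assume "X \<in> F" then show ?thesis using M_D(1)[OF assms(1)] by blast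
    next
      assume "\<exists>G\<in>F. X = shift_set s a b G"
      then obtain G where G: "G \<in> F" "X = shift_set s a b G" by blast
      then have "G \<in> prod_binom p n k" using M_D(1)[OF assms(1)] by blast
      then show ?thesis using sh_P[of G p n k s a b] assms(2-5) G(2) by simp
    qed
  qed
  have inter: "intersecting ?S" using shift_fam_intersecting[OF ab M_D(2)[OF assms(1)]] .
  have card: "card ?S = card F" using shift_fam_card[OF ab M_D(6)[OF assms(1)]] .
  have meets: "(t,1) \<in> X \<or> (t,2) \<in> X" if X: "X \<in> ?S" for X
  proof -
    { fix G assume G: "G \<in> F" and XG: "X = shift_set s a b G"
      have ?thesis
      proof (cases "shift_set s a b G = G")
        case True then show ?thesis using XG G M_D(5)[OF assms(1)] by simp
      next
        case False
        then have h: "(s,a) \<notin> G" "(s,b) \<in> G" using sh_unchanged by blast+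
        have X': "X = insert (s,a) (G - {(s,b)})" using XG sh_changed[OF h] by simp
        have "(s,a) \<in> X" using X' by simp
        moreover have "(t,1) \<noteq> (s,b)" using assms(3,4) by simp
        ultimately show ?thesis using M_D(5)[OF assms(1) G] X' assms(3,4)
          by (cases "(t,2) = (s,b)") auto
      qed }
    moreover have "X \<in> F \<or> (\<exists>G\<in>F. X = shift_set s a b G)" using X by (rule shift_fam_elems)
    ultimately show ?thesis using M_D(5)[OF assms(1)] by blast
  qed
  have mx: "card G \<le> card ?S" if "G \<subseteq> prod_binom p n k" "nontrivially_intersecting G" for G
    using M_D(4)[OF assms(1) that] card by simp
  have "max_nontriv p n k ?S"
    unfolding max_nontriv_def nontrivially_intersecting_def using sub inter nt mx
    unfolding nontrivially_intersecting_def by blast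
  then show ?thesis unfolding M_def using meets by blast
qed

end



context sett
begin

lemma sh_in:
  assumes F0: "F0 \<in> M" and s: "s \<in> {1..p}" "1 \<le> a" "a < b" "b \<le> n s"
    and H: "H \<in> F0" and c: "shift_set s a b H = H \<or> ((t,1) \<in> shift_set s a b H \<and> (t,2) \<in> shift_set s a b H)"
  shows "shift_set s a b H \<in> F0"
proof (cases "shift_set s a b H = H")
  case True then show ?thesis using H by simp
next
  case False
  have "H \<in> prod_binom p n k" using M_D(1)[OF F0] H by blast
  then have "shift_set s a b H \<in> prod_binom p n k" using sh_P[of H p n k s a b] s by simp
  then show ?thesis using A_full[OF F0] c False by blast
qed

lemma witness:
  assumes F0: "F0 \<in> M" and s: "s \<in> {1..p}" "1 \<le> a" "a < b" "b \<le> n s"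
    and not12: "\<not> (s = t \<and> a = 1 \<and> b = 2)"
  shows "\<exists>H\<in>F0. (s,a) \<notin> H \<and> shift_set s a b H \<in> F0"
proof -
  have ntriv: "\<exists>H\<in>F0. e \<notin> H" for e
    using M_D(3)[OF F0] unfolding trivially_intersecting_def by blast
  show ?thesis
  proof (cases "s = t \<and> (a = 1 \<or> a = 2)")
    case True
    then have st: "s = t" and a12: "a = 1 \<or> a = 2" by auto
    have b3: "3 \<le> b" using not12 s(3) a12 st by auto
    obtain H where H: "H \<in> F0" "(s,a) \<notin> H" using ntriv by blast
    have other: "(t, 3 - a) \<in> H" using M_D(5)[OF F0 H(1)] H(2) st a12 by auto
    have "shift_set s a b H = H \<or> ((t,1) \<in> shift_set s a b H \<and> (t,2) \<in> shift_set s a b H)"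
    proof (cases "shift_set s a b H = H")
      case False
      then have h: "(s,a) \<notin> H" "(s,b) \<in> H" using sh_unchanged by blast+
      have "(t, 3 - a) \<noteq> (s,b)" using b3 a12 by auto
      then have "(t, 3 - a) \<in> shift_set s a b H" using sh_mem[OF other] by blast
      moreover have "(s,a) \<in> shift_set s a b H" using sh_changed[OF h] by simp
      ultimately show ?thesis using a12 st by auto
    qed simp
    then show ?thesis using sh_in[OF F0 s H(1)] H by blast
  next
    case False
    then have n1: "(s,a) \<noteq> (t,1)" "(s,a) \<noteq> (t,2)" by auto
    obtain H where HP: "H \<in> prod_binom p n k" "(t,1) \<in> H" "(t,2) \<in> H" "(s,a) \<notin> H"
      using exH[OF s(1) n1] by blast
    have HF: "H \<in> F0" using A_full[OF F0 HP(1-3)] .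
    have nb: "(t,1) \<noteq> (s,b)" "(t,2) \<noteq> (s,b)" using False s(2,3) by auto
    have "(t,1) \<in> shift_set s a b H" "(t,2) \<in> shift_set s a b H"
      using sh_mem[OF HP(2) nb(1)] sh_mem[OF HP(3) nb(2)] by auto
    then show ?thesis using sh_in[OF F0 s HF] HF HP(4) by blast
  qed
qed

lemma fix_other:
  assumes F0: "F0 \<in> M" and minW: "\<forall>F\<in>M. W F0 \<le> W F"
    and s: "s \<in> {1..p}" "1 \<le> a" "a < b" "b \<le> n s"
    and not12: "\<not> (s = t \<and> a = 1 \<and> b = 2)"
  shows "shift_fam s a b F0 = F0"
proof (rule ccontr)
  assume ne: "shift_fam s a b F0 \<noteq> F0"
  let ?S = "shift_fam s a b F0"
  obtain H where H: "H \<in> F0" "(s,a) \<notin> H" "shift_set s a b H \<in> F0"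
    using witness[OF F0 s not12] by blast
  have nt: "\<not> trivially_intersecting ?S"
  proof
    assume "trivially_intersecting ?S"
    then obtain e where e: "\<forall>X\<in>?S. e \<in> X" unfolding trivially_intersecting_def by blast
    show False
    proof (cases "e = (s,a)")
      case True
      have "H \<in> ?S" using mem_shift_fam[OF H(1) H(3)] .
      then show False using e True H(2) by blast
    next
      case False
      then have "\<forall>G\<in>F0. e \<in> G" using sh_triv[OF e] by blast
      then show False using M_D(3)[OF F0] unfolding trivially_intersecting_def by blast
    qed
  qed
  have "?S \<in> M" using in_M[OF F0 s nt] .
  then have "W F0 \<le> W ?S" using minW by blast
  moreover have "W ?S < W F0"
  proof (rule W_less)
    show "finite F0" using M_D(6)[OF F0] .
    show "\<forall>G\<in>F0. finite G" using M_D(1)[OF F0] P_finite_mem by blast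
  qed (use s ne in auto)
  ultimately show False by simp
qed

definition Ic :: "nat \<Rightarrow> (nat \<times> nat) set" where
  "Ic c = mk p (\<lambda>s. if s = t then insert c {3..k t+1} else {1..k s})"

lemma descent:
  assumes sub: "F0 \<subseteq> prod_binom p n k"
    and cl: "\<And>s a b G. s \<in> {1..p} \<Longrightarrow> 1 \<le> a \<Longrightarrow> a < b \<Longrightarrow> b \<le> n s \<Longrightarrow> (s = t \<longrightarrow> 3 \<le> a)
        \<Longrightarrow> G \<in> F0 \<Longrightarrow> shift_set s a b G \<in> F0"
    and c: "c \<in> {1,2}"
  shows "G \<in> F0 \<Longrightarrow> part G t \<inter> {1,2} = {c} \<Longrightarrow> Ic c \<in> F0"
proof (induction "wt G" arbitrary: G rule: less_induct)
  case less
  define R where "R = (\<lambda>s. if s = t then insert c {3..k t+1} else {1..k s})"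
  have GP: "G \<in> prod_binom p n k" using sub less.prems(1) by blast
  show ?case
  proof (cases "\<forall>s\<in>{1..p}. part G s = R s")
    case True
    then have "G = mk p R" using P_eq_mk[OF GP] by blast
    then show ?thesis using less.prems(1) unfolding Ic_def R_def by simp
  next
    case False
    then obtain s where s: "s \<in> {1..p}" "part G s \<noteq> R s" by blast
    have ps: "part G s \<subseteq> {1..n s}" by (rule P_part_sub[OF GP])
    have pc: "card (part G s) = k s" by (rule P_part_card[OF GP s(1)])
    have fin: "finite (part G s)" using ps finite_subset by blast
    obtain a b where ab: "a \<notin> part G s" "b \<in> part G s" "1 \<le> a" "a < b" "s = t \<longrightarrow> 3 \<le> a"
    proof (cases "s = t")
      case True
      define X where "X = part G t - {c}"
      have cin: "c \<in> part G t" using less.prems(2) by blast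
      have X3: "\<forall>x\<in>X. 3 \<le> x"
      proof
        fix x assume x: "x \<in> X"
        then have "x \<in> part G t" "x \<noteq> c" unfolding X_def by auto
        then have "x \<notin> {1,2}" using less.prems(2) by blast
        moreover have "1 \<le> x" using \<open>x \<in> part G t\<close> ps True by auto
        ultimately show "3 \<le> x" by auto
      qed
      have finX: "finite X" using fin True unfolding X_def by simp
      have cX: "card X = k t - 1" using pc True cin fin unfolding X_def by (simp add: card_Diff_singleton)
      have iv: "{3..<3 + (k t - 1)} = {3..k t+1}" using kt by auto
      have "X \<noteq> {3..<3 + (k t - 1)}"
      proof
        assume "X = {3..<3 + (k t - 1)}"
        moreover have "part G t = insert c X" using cin unfolding X_def by auto
        ultimately have "part G t = insert c {3..k t+1}" using iv by simp
        then show False using s(2) True unfolding R_def by simp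
      qed
      then have "\<not> (\<forall>b\<in>X. \<forall>a. 3 \<le> a \<longrightarrow> a < b \<longrightarrow> a \<in> X)"
        using interval_lemma[OF finX X3 cX] by blast
      then obtain b a where ba: "b \<in> X" "3 \<le> a" "a < b" "a \<notin> X" by blast
      have "a \<notin> part G t" using ba c unfolding X_def by auto
      moreover have "b \<in> part G t" using ba unfolding X_def by auto
      ultimately show thesis using that[of a b] ba True by simp
    next
      case False
      have X1: "\<forall>x\<in>part G s. 1 \<le> x" using ps by auto
      have e1: "{1..<1 + k s} = {1..k s}" by auto
      have "R s = {1..k s}" using False unfolding R_def by simp
      then have "part G s \<noteq> {1..<1 + k s}" using s(2) e1 by simp
      then have "\<not> (\<forall>b\<in>part G s. \<forall>a. 1 \<le> a \<longrightarrow> a < b \<longrightarrow> a \<in> part G s)"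
        using interval_lemma[OF fin X1 pc] by blast
      then obtain b a where ba: "b \<in> part G s" "1 \<le> a" "a < b" "a \<notin> part G s" by blast
      then show thesis using that[of a b] False by simp
    qed
    have bn: "b \<le> n s" using ab(2) ps by auto
    let ?G' = "shift_set s a b G"
    have G'F: "?G' \<in> F0" using cl[OF s(1) ab(3) ab(4) bn ab(5) less.prems(1)] .
    have ch: "(s,a) \<notin> G" "(s,b) \<in> G" using ab(1,2) unfolding part_def by auto
    have wlt: "wt ?G' < wt G" using sh_wt[OF P_finite_mem[OF GP] ch] ab(4) by simp
    have "part ?G' t \<inter> {1,2} = {c}"
    proof (cases "s = t")
      case True
      then have "part ?G' t = insert a (part G t - {b})" using part_sh[OF ch, of t] by simp
      moreover have "a \<notin> {1,2}" "b \<notin> {1,2}" using ab(4,5) True by auto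
      then have "insert a (part G t - {b}) \<inter> {1,2} = part G t \<inter> {1,2}" by auto
      ultimately show ?thesis using less.prems(2) by simp
    next
      case False
      then show ?thesis using part_sh[OF ch, of t] less.prems(2) by simp
    qed
    then show ?thesis using less.hyps[OF wlt G'F] by blast
  qed
qed

lemma Ic_mem: "(t, x) \<in> Ic c \<longleftrightarrow> x \<in> insert c {3..k t+1}"
  using t unfolding Ic_def mk_def by auto

lemma sh_Ic: "shift_set t 1 2 (Ic 2) = Ic 1"
proof -
  have h: "(t,1) \<notin> Ic 2" "(t,2) \<in> Ic 2" using Ic_mem by auto
  have "insert (t,1) (Ic 2 - {(t,2)}) = Ic 1"
  proof (rule set_eqI)
    fix x :: "nat \<times> nat"
    obtain s y where x: "x = (s,y)" by force
    show "x \<in> insert (t,1) (Ic 2 - {(t,2)}) \<longleftrightarrow> x \<in> Ic 1"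
    proof (cases "s = t")
      case True then show ?thesis using x Ic_mem[of y 2] Ic_mem[of y 1] by auto
    next
      case False then show ?thesis using x unfolding Ic_def mk_def by auto
    qed
  qed
  then show ?thesis using sh_changed[OF h] by simp
qed

lemma fix_12:
  assumes F0: "F0 \<in> M" and minW: "\<forall>F\<in>M. W F0 \<le> W F"
    and others: "\<And>s a b. s \<in> {1..p} \<Longrightarrow> 1 \<le> a \<Longrightarrow> a < b \<Longrightarrow> b \<le> n s \<Longrightarrow> \<not> (s = t \<and> a = 1 \<and> b = 2)
        \<Longrightarrow> shift_fam s a b F0 = F0"
  shows "shift_fam t 1 2 F0 = F0"
proof (rule ccontr)
  assume ne: "shift_fam t 1 2 F0 \<noteq> F0"
  let ?S = "shift_fam t 1 2 F0"
  have cl: "shift_set s a b G \<in> F0" if "s \<in> {1..p}" "1 \<le> a" "a < b" "b \<le> n s" "s = t \<longrightarrow> 3 \<le> a" "G \<in> F0"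
    for s a b G
  proof -
    have "\<not> (s = t \<and> a = 1 \<and> b = 2)" using that(5) by auto
    then have "shift_fam s a b F0 = F0" using others that(1-4) by blast
    then show ?thesis using fixed_closed that(6) by blast
  qed
  have ntriv: "\<exists>H\<in>F0. e \<notin> H" for e
    using M_D(3)[OF F0] unfolding trivially_intersecting_def by blast
  obtain G1 where G1: "G1 \<in> F0" "(t,1) \<notin> G1" using ntriv by blast
  have "(t,2) \<in> G1" using M_D(5)[OF F0 G1(1)] G1(2) by blast
  then have "part G1 t \<inter> {1,2} = {2}" using G1(2) unfolding part_def by auto
  then have I2: "Ic 2 \<in> F0" using descent[OF M_D(1)[OF F0] cl, of 2 G1] G1(1) by auto
  obtain G2 where G2: "G2 \<in> F0" "(t,2) \<notin> G2" using ntriv by blast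
  have "(t,1) \<in> G2" using M_D(5)[OF F0 G2(1)] G2(2) by blast
  then have "part G2 t \<inter> {1,2} = {1}" using G2(2) unfolding part_def by auto
  then have I1: "Ic 1 \<in> F0" using descent[OF M_D(1)[OF F0] cl, of 1 G2] G2(1) by auto
  have I2S: "Ic 2 \<in> ?S" using mem_shift_fam[OF I2, of t 1 2] sh_Ic I1 by simp
  have n2: "2 \<le> n t" using kn kt t by force
  have nt: "\<not> trivially_intersecting ?S"
  proof
    assume "trivially_intersecting ?S"
    then obtain e where e: "\<forall>X\<in>?S. e \<in> X" unfolding trivially_intersecting_def by blast
    show False
    proof (cases "e = (t,1)")
      case True
      then show False using e I2S Ic_mem[of 1 2] by auto
    next
      case False
      then have "\<forall>G\<in>F0. e \<in> G" using sh_triv[OF e] by blast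
      then show False using M_D(3)[OF F0] unfolding trivially_intersecting_def by blast
    qed
  qed
  have "?S \<in> M" using in_M[OF F0 t _ _ n2 nt] by simp
  then have "W F0 \<le> W ?S" using minW by blast
  moreover have "W ?S < W F0"
  proof (rule W_less)
    show "finite F0" using M_D(6)[OF F0] .
    show "\<forall>G\<in>F0. finite G" using M_D(1)[OF F0] P_finite_mem by blast
  qed (use ne in auto)
  ultimately show False by simp
qed

lemma main_sett:
  assumes "M \<noteq> {}"
  shows "\<exists>F'. max_nontriv p n k F' \<and> shifted p n F'"
proof -
  obtain F1 where "F1 \<in> M" using assms by blast
  then obtain F0 where F0: "F0 \<in> M" and minW: "\<forall>F\<in>M. W F0 \<le> W F"
    using ex_has_least_nat[of "\<lambda>F. F \<in> M" F1 W] by blast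
  have others: "shift_fam s a b F0 = F0"
    if "s \<in> {1..p}" "1 \<le> a" "a < b" "b \<le> n s" "\<not> (s = t \<and> a = 1 \<and> b = 2)" for s a b
    using fix_other[OF F0 minW that] .
  have f12: "shift_fam t 1 2 F0 = F0" using fix_12[OF F0 minW others] by blast
  have "shifted p n F0"
    unfolding shifted_def part_shifted_def
  proof (intro ballI allI impI)
    fix s i j assume s: "s \<in> {1..p}" and ij: "1 \<le> i \<and> i < j \<and> j \<le> n s"
    show "shift_fam s i j F0 = F0"
    proof (cases "s = t \<and> i = 1 \<and> j = 2")
      case True then show ?thesis using f12 by simp
    next
      case False then show ?thesis using others s ij by blast
    qed
  qed
  moreover have "max_nontriv p n k F0" using F0 unfolding M_def by blast
  ultimately show ?thesis by blast
qed

end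



lemma relabel:
  assumes mx: "max_nontriv p n k F" and t: "t \<in> {1..p}" and ij: "1 \<le> i" "i < j" "j \<le> n t"
    and meet: "\<forall>G\<in>F. (t,i) \<in> G \<or> (t,j) \<in> G"
  shows "\<exists>F1. max_nontriv p n k F1 \<and> (\<forall>G\<in>F1. (t,1) \<in> G \<or> (t,2) \<in> G)"
proof -
  define sg :: "nat \<Rightarrow> nat" where "sg = transpose 2 j \<circ> transpose 1 i"
  define pi :: "nat \<times> nat \<Rightarrow> nat \<times> nat" where "pi = (\<lambda>(s,c). if s = t then (s, sg c) else (s,c))"
  have bij_sg: "bij sg" unfolding sg_def by (simp add: bij_comp)
  then have inj_sg: "inj sg" by (rule bij_is_inj)
  have j1: "j \<noteq> 1" "j \<noteq> i" using ij by auto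
  have sgi: "sg i = 1" "sg j = 2" unfolding sg_def using j1 by (auto simp: transpose_def)
  have sg_range: "sg c \<in> {1..n t}" if "c \<in> {1..n t}" for c
    using that ij unfolding sg_def by (auto simp: transpose_def)
  have inj_pi: "inj pi"
  proof (rule injI)
    fix x y assume e: "pi x = pi y"
    obtain s c s' c' where xy: "x = (s,c)" "y = (s',c')" by force
    have ss: "s = s'" using e xy unfolding pi_def by (auto split: if_splits)
    show "x = y"
    proof (cases "s = t")
      case True
      then have "sg c = sg c'" using e xy ss unfolding pi_def by simp
      then show ?thesis using inj_sg xy ss by (simp add: inj_eq)
    next
      case False then show ?thesis using e xy ss unfolding pi_def by simp
    qed
  qed
  have surj_pi: "\<exists>x. pi x = e" for e
  proof -
    obtain s c where e: "e = (s,c)" by force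
    show ?thesis
    proof (cases "s = t")
      case True
      have "sg (inv sg c) = c" using bij_sg by (simp add: bij_is_surj surj_f_inv_f)
      then obtain d where "sg d = c" by blast
      then show ?thesis using e True unfolding pi_def by (intro exI[of _ "(s,d)"]) simp
    next
      case False then show ?thesis using e unfolding pi_def by (intro exI[of _ "(s,c)"]) simp
    qed
  qed
  have part_pi: "part (pi ` G) s = (if s = t then sg ` part G s else part G s)" for G s
  proof (rule set_eqI)
    fix x
    show "x \<in> part (pi ` G) s \<longleftrightarrow> x \<in> (if s = t then sg ` part G s else part G s)"
    proof
      assume "x \<in> part (pi ` G) s"
      then obtain y where y: "y \<in> G" "pi y = (s,x)" unfolding part_def by auto
      obtain s' c where yy: "y = (s',c)" by force
      show "x \<in> (if s = t then sg ` part G s else part G s)"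
        using y yy unfolding pi_def part_def by (auto split: if_splits)
    next
      assume x: "x \<in> (if s = t then sg ` part G s else part G s)"
      show "x \<in> part (pi ` G) s"
      proof (cases "s = t")
        case True
        then obtain c where "c \<in> part G s" "x = sg c" using x by auto
        then have "(s,c) \<in> G" "pi (s,c) = (s,x)" using True unfolding part_def pi_def by auto
        then have "(s,x) \<in> pi ` G" by (intro image_eqI[OF sym]) 
        then show ?thesis unfolding part_def by simp
      next
        case False
        then have "(s,x) \<in> G" "pi (s,x) = (s,x)" using x unfolding part_def pi_def by auto
        then have "(s,x) \<in> pi ` G" by (intro image_eqI[OF sym]) 
        then show ?thesis unfolding part_def by simp
      qed
    qed
  qed
  have P_pi: "pi ` G \<in> prod_binom p n k" if G: "G \<in> prod_binom p n k" for G
  proof -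
    have "pi ` G \<subseteq> ground p n"
    proof
      fix y assume "y \<in> pi ` G"
      then obtain x where x: "x \<in> G" "y = pi x" by blast
      obtain s c where xx: "x = (s,c)" by force
      have "s \<in> {1..p}" "c \<in> {1..n s}" using P_ground[OF G] x(1) xx unfolding ground_def by auto
      then show "y \<in> ground p n" using x(2) xx sg_range unfolding pi_def ground_def by auto
    qed
    moreover have "card (part (pi ` G) s) = k s" if s: "s \<in> {1..p}" for s
    proof (cases "s = t")
      case True
      have "card (sg ` part G s) = card (part G s)"
        by (rule card_image, rule inj_on_subset[OF inj_sg]) simp
      then show ?thesis using True part_pi[of G s] P_part_card[OF G s] by simp
    next
      case False then show ?thesis using part_pi[of G s] P_part_card[OF G s] by simp
    qed
    ultimately show ?thesis unfolding prod_binom_def by blast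
  qed
  define F1 where "F1 = (\<lambda>G. pi ` G) ` F"
  have FP: "F \<subseteq> prod_binom p n k" and Fi: "intersecting F" and Fnt: "\<not> trivially_intersecting F"
    and Fmax: "\<And>G. G \<subseteq> prod_binom p n k \<Longrightarrow> nontrivially_intersecting G \<Longrightarrow> card G \<le> card F"
    using mx unfolding max_nontriv_def nontrivially_intersecting_def by blast+
  have injF: "inj_on (\<lambda>G. pi ` G) F"
    by (rule inj_onI) (use inj_pi in \<open>simp add: inj_image_eq_iff\<close>)
  have cardF1: "card F1 = card F" unfolding F1_def by (rule card_image[OF injF])
  have F1P: "F1 \<subseteq> prod_binom p n k" using FP P_pi unfolding F1_def by blast
  have F1i: "intersecting F1"
    unfolding intersecting_def F1_def
  proof (intro ballI)
    fix X Y assume "X \<in> (\<lambda>G. pi ` G) ` F" "Y \<in> (\<lambda>G. pi ` G) ` F"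
    then obtain A B where AB: "A \<in> F" "B \<in> F" "X = pi ` A" "Y = pi ` B" by blast
    have "A \<inter> B \<noteq> {}" using Fi AB(1,2) unfolding intersecting_def by blast
    then show "X \<inter> Y \<noteq> {}" using AB(3,4) image_Int[OF inj_pi, of A B] by auto
  qed
  have F1nt: "\<not> trivially_intersecting F1"
  proof
    assume "trivially_intersecting F1"
    then obtain e where e: "\<forall>X\<in>F1. e \<in> X" unfolding trivially_intersecting_def by blast
    obtain e' where e': "pi e' = e" using surj_pi by blast
    have "\<forall>G\<in>F. e' \<in> G"
    proof
      fix G assume "G \<in> F"
      then have "pi e' \<in> pi ` G" using e e' unfolding F1_def by blast
      then show "e' \<in> G" using inj_pi by (simp add: inj_image_mem_iff)
    qed
    then show False using Fnt unfolding trivially_intersecting_def by blast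
  qed
  have F1m: "\<forall>G\<in>F1. (t,1) \<in> G \<or> (t,2) \<in> G"
  proof
    fix X assume "X \<in> F1"
    then obtain G where G: "G \<in> F" "X = pi ` G" unfolding F1_def by blast
    have p1: "pi (t,i) = (t,1)" and p2: "pi (t,j) = (t,2)" using sgi unfolding pi_def by auto
    have "(t,i) \<in> G \<or> (t,j) \<in> G" using meet G(1) by blast
    then show "(t,1) \<in> X \<or> (t,2) \<in> X"
    proof
      assume "(t,i) \<in> G"
      then have "pi (t,i) \<in> pi ` G" by (rule imageI)
      then show ?thesis using p1 G(2) by simp
    next
      assume "(t,j) \<in> G"
      then have "pi (t,j) \<in> pi ` G" by (rule imageI)
      then show ?thesis using p2 G(2) by simp
    qed
  qed
  have mxF1: "card G \<le> card F1" if "G \<subseteq> prod_binom p n k" "nontrivially_intersecting G" for G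
    using Fmax[OF that] cardF1 by simp
  have "nontrivially_intersecting F1" unfolding nontrivially_intersecting_def using F1i F1nt by blast
  then have "max_nontriv p n k F1"
    unfolding max_nontriv_def using F1P mxF1 by blast
  then show ?thesis using F1m by blast
qed

theorem lemma2p3:
  fixes p :: nat and n k :: "nat \<Rightarrow> nat"
  assumes "p \<ge> 1"
    and "\<forall>s\<in>{1..p}. n s \<ge> 1 \<and> 1 \<le> k s \<and> k s \<le> n s"
    and "\<exists>\<F> Q. max_nontriv p n k \<F> \<and> Q \<subset> {1..p} \<and> Q_shifted p n Q \<F> \<and>
           (\<exists>t\<in>{1..p} - Q. k t > 1)"
  shows "\<exists>\<F>'. max_nontriv p n k \<F>' \<and> shifted p n \<F>'"
proof -
  obtain F Q t where mx: "max_nontriv p n k F" and Qs: "Q_shifted p n Q F"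
    and tQ: "t \<in> {1..p} - Q" and kt1: "k t > 1"
    using assms(3) by blast
  have t: "t \<in> {1..p}" using tQ by blast
  obtain i j where ij: "1 \<le> i" "i < j" "j \<le> n t" and tr: "trivially_intersecting (shift_fam t i j F)"
    using Qs tQ unfolding Q_shifted_def by blast
  obtain e where e: "\<forall>X\<in>shift_fam t i j F. e \<in> X" using tr unfolding trivially_intersecting_def by blast
  have FP: "F \<subseteq> prod_binom p n k" and Fnt: "\<not> trivially_intersecting F"
    using mx unfolding max_nontriv_def nontrivially_intersecting_def by blast+
  have ee: "e = (t,i)"
  proof (rule ccontr)
    assume "e \<noteq> (t,i)"
    then have "\<forall>G\<in>F. e \<in> G" using sh_triv[OF e] by blast
    then show False using Fnt unfolding trivially_intersecting_def by blast
  qed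
  have meet: "\<forall>G\<in>F. (t,i) \<in> G \<or> (t,j) \<in> G"
  proof
    fix G assume G: "G \<in> F"
    then have "shift_set t i j G \<in> shift_fam t i j F" unfolding shift_fam_def by blast
    then have "(t,i) \<in> shift_set t i j G" using e ee by blast
    then show "(t,i) \<in> G \<or> (t,j) \<in> G" using sh_unchanged[of t i G j] by auto
  qed
  have kn: "\<forall>s\<in>{1..p}. 1 \<le> k s \<and> k s < n s"
  proof
    fix s assume s: "s \<in> {1..p}"
    have k1: "1 \<le> k s" "k s \<le> n s" "1 \<le> n s" using assms(2) s by auto
    have "k s \<noteq> n s"
    proof
      assume kn: "k s = n s"
      have "\<forall>G\<in>F. (s,1) \<in> G"
      proof
        fix G assume "G \<in> F"
        then have G: "G \<in> prod_binom p n k" using FP by blast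
        have "part G s = {1..n s}"
          using card_subset_eq[OF _ P_part_sub[OF G]] P_part_card[OF G s] kn by simp
        then show "(s,1) \<in> G" using k1 unfolding part_def by auto
      qed
      then show False using Fnt unfolding trivially_intersecting_def by blast
    qed
    then show "1 \<le> k s \<and> k s < n s" using k1 by simp
  qed
  interpret sett p n k t
    by unfold_locales (use t kt1 kn in auto)
  obtain F1 where "max_nontriv p n k F1" "\<forall>G\<in>F1. (t,1) \<in> G \<or> (t,2) \<in> G"
    using relabel[OF mx t ij meet] by blast
  then have "F1 \<in> M" unfolding M_def by blast
  then show ?thesis using main_sett by blast
qed


end
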